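(* Let $\alpha\in(0,1)$ and run GD with learning rate $\eta$ from $\mathbf{W}_0=\mathbf{0}$, where $\eta p_1\lesssim1$. Then for every $j\in[K]$ and every sufficiently large training time $t\gg\frac{\log\log K}{\eta p_j}$, $$\mathcal{L}_j^{\mathrm{GD}}(t)-\mathcal{L}_j^*\gtrsim e^{-\eta p_j t}(\log K)^2,$$ where $\mathcal{L}_j^*=-\big(1-\alpha+\tfrac{\alpha}{K}\big)\log\big(1-\alpha+\tfrac{\alpha}{K}\big)-\tfrac{\alpha(K-1)}{K}\log\tfrac{\alpha}{K}$ is the minimal sub-task loss.
   Context: Setup: $K=MC$ items in $M$ groups of $C$ items (group $i$: indices $(i-1)C+1,\dots,iC$); $\widetilde p_1>\dots>\widetilde p_M>0$, $\sum_i\widetilde p_i=1$, $p_j=\widetilde p_i/C$ for $j$ in group $i$. $\mathbf{E},\widetilde{\mathbf{E}}\in\mathbb{R}^{K\times K}$ have orthonormal columns. Noise: $p_{i\mid j}=1-\alpha+\alpha/K$ if $i=j$, $\alpha/K$ otherwise. $\widehat p_{i\mid j}(\mathbf{W})=\exp(\widetilde{\mathbf{E}}_i^\top\mathbf{W}\mathbf{E}_j)/\sum_k\exp(\widetilde{\mathbf{E}}_k^\top\mathbf{W}\mathbf{E}_j)$; $\mathcal{L}_j(\mathbf{W})=-\sum_ip_{i\mid j}\log\widehat p_{i\mid j}(\mathbf{W})$, $\mathcal{L}=\sum_jp_j\mathcal{L}_j$. GD: $\mathbf{W}_{t+1}=\mathbf{W}_t-\eta\nabla\mathcal{L}(\mathbf{W}_t)$,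 $\mathcal{L}^{\mathrm{GD}}_j(t)=\mathcal{L}_j(\mathbf{W}_t)$. Regime $K\gg1$, $M\ll C$; $\lesssim,\gtrsim$ hide constant factors and $\gg$ means "much larger than". *)

theory Defs
  imports "HOL-Analysis.Analysis"
begin

text \<open>Matrices in R^{K x K} are represented as functions nat => nat => real,
  with indices 0..K-1 (0-based; item j of the paper is index j-1 here).
  Column i of a matrix E is the vector (\<lambda>r. E r i).\<close>

type_synonym mat = "nat \<Rightarrow> nat \<Rightarrow> real"

definition orthonormal_cols :: "nat \<Rightarrow> mat \<Rightarrow> bool" where
  "orthonormal_cols K E \<longleftrightarrow>
     (\<forall>i<K. \<forall>k<K. (\<Sum>r<K. E r i * E r k) = (if i = k then 1 else 0))"

definition item_prob :: "nat \<Rightarrow> (nat \<Rightarrow> real) \<Rightarrow> nat \<Rightarrow> real" where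
  "item_prob C pt j = pt (j div C) / real C"

definition noise_prob :: "nat \<Rightarrow> real \<Rightarrow> nat \<Rightarrow> nat \<Rightarrow> real" where
  "noise_prob K \<alpha> i j = (if i = j then 1 - \<alpha> + \<alpha> / real K else \<alpha> / real K)"

definition logit :: "nat \<Rightarrow> mat \<Rightarrow> mat \<Rightarrow> mat \<Rightarrow> nat \<Rightarrow> nat \<Rightarrow> real" where
  "logit K E Et W i j = (\<Sum>r<K. \<Sum>s<K. Et r i * W r s * E s j)"

definition pred_prob :: "nat \<Rightarrow> mat \<Rightarrow> mat \<Rightarrow> mat \<Rightarrow> nat \<Rightarrow> nat \<Rightarrow> real" where
  "pred_prob K E Et W i j =
     exp (logit K E Et W i j) / (\<Sum>k<K. exp (logit K E Et W k j))"

definition loss_j :: "nat \<Rightarrow> real \<Rightarrow> mat \<Rightarrow> mat \<Rightarrow> mat \<Rightarrow> nat \<Rightarrow> real" where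
  "loss_j K \<alpha> E Et W j = - (\<Sum>i<K. noise_prob K \<alpha> i j * ln (pred_prob K E Et W i j))"

definition loss :: "nat \<Rightarrow> nat \<Rightarrow> (nat \<Rightarrow> real) \<Rightarrow> real \<Rightarrow> mat \<Rightarrow> mat \<Rightarrow> mat \<Rightarrow> real" where
  "loss K C pt \<alpha> E Et W = (\<Sum>j<K. item_prob C pt j * loss_j K \<alpha> E Et W j)"

definition mat_grad :: "(mat \<Rightarrow> real) \<Rightarrow> mat \<Rightarrow> mat" where
  "mat_grad f W = (\<lambda>a b. deriv (\<lambda>s. f (\<lambda>r c. W r c + (if r = a \<and> c = b then s else 0))) 0)"

primrec gd :: "nat \<Rightarrow> nat \<Rightarrow> (nat \<Rightarrow> real) \<Rightarrow> real \<Rightarrow> mat \<Rightarrow> mat \<Rightarrow> real \<Rightarrow> nat \<Rightarrow> mat" where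
  "gd K C pt \<alpha> E Et \<eta> 0 = (\<lambda>r c. 0)"
| "gd K C pt \<alpha> E Et \<eta> (Suc t) =
     (let W = gd K C pt \<alpha> E Et \<eta> t; G = mat_grad (loss K C pt \<alpha> E Et) W in
      (\<lambda>r c. if r < K \<and> c < K then W r c - \<eta> * G r c else 0))"

definition loss_star :: "nat \<Rightarrow> real \<Rightarrow> real" where
  "loss_star K \<alpha> = - (1 - \<alpha> + \<alpha> / real K) * ln (1 - \<alpha> + \<alpha> / real K)
                    - \<alpha> * (real K - 1) / real K * ln (\<alpha> / real K)"

end

theory Submission
  imports Defs
begin


definition qf :: "nat \<Rightarrow> real \<Rightarrow> real" where
  "qf K d = exp d / (exp d + real K - 1)"

lemma qf_deriv:
  assumes "K \<ge> 1"
  shows "(qf K has_real_derivative exp d * (real K - 1) / (exp d + real K - 1)^2) (at d)"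
proof -
  have pos: "exp d + real K - 1 > 0" using assms by (smt (verit) exp_gt_zero of_nat_1 of_nat_mono)
  show ?thesis unfolding qf_def[abs_def]
    apply (rule DERIV_cong)
     apply (intro derivative_eq_intros refl)
    using pos apply simp_all
    apply (simp add: field_simps power2_eq_square)
    done
qed

lemma qf_lip:
  assumes "K \<ge> 1" "\<delta> \<ge> 0"
  shows "qf K (d + \<delta>) \<le> qf K d + \<delta> / 4"
proof -
  let ?g = "\<lambda>s. s / 4 - qf K s"
  have der: "(?g has_real_derivative 1/4 - exp s * (real K - 1) / (exp s + real K - 1)^2) (at s)" for s
  proof -
    have "((\<lambda>s. s / 4) has_real_derivative 1/4) (at s)"
      using DERIV_cdivide[OF DERIV_ident, of 4 s] by simp
    from DERIV_diff[OF this qf_deriv[OF assms(1)]] show ?thesis .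
  qed
  have nn: "exp s * (real K - 1) / (exp s + real K - 1)^2 \<le> 1/4" for s
  proof -
    have pos: "exp s + real K - 1 > 0" using assms by (smt (verit) exp_gt_zero of_nat_1 of_nat_mono)
    have "4 * (exp s * (real K - 1)) \<le> (exp s + real K - 1)^2"
      using sum_squares_ge_zero[of "exp s - (real K - 1)" 0]
      by (simp add: power2_eq_square algebra_simps)
    then show ?thesis using pos by (simp add: field_simps)
  qed
  have "?g d \<le> ?g (d + \<delta>)"
  proof (rule DERIV_nonneg_imp_increasing_open[where f="?g"])
    show "d \<le> d + \<delta>" using assms by simp
    show "\<exists>y. (?g has_real_derivative y) (at x) \<and> 0 \<le> y" for x
      using der[of x] nn[of x] by (intro exI[of _ "1/4 - exp x * (real K - 1) / (exp x + real K - 1)^2"]) simp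
    show "continuous_on {d..d + \<delta>} ?g"
      using der by (meson DERIV_isCont continuous_at_imp_continuous_on)
  qed
  then show ?thesis by (simp add: field_simps)
qed

lemma pinsker:
  fixes q P :: real
  assumes "0 < q" "q \<le> P" "P < 1"
  shows "P * ln (P / q) + (1 - P) * ln ((1 - P) / (1 - q)) \<ge> 2 * (P - q)^2"
proof -
  let ?g = "\<lambda>s. P * (ln P - ln s) + (1 - P) * (ln (1 - P) - ln (1 - s)) - 2 * (P - s)^2"
  have der: "(?g has_real_derivative (- P / s + (1 - P) / (1 - s) + 4 * (P - s))) (at s)"
    if "0 < s" "s < 1" for s
    apply (rule DERIV_cong)
     apply (intro derivative_eq_intros)
    using that apply simp_all
    apply (simp add: field_simps)
    done
  have "?g P \<le> ?g q"
  proof (rule DERIV_nonpos_imp_decreasing_open[where f="?g"])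
    show "q \<le> P" by fact
    show "\<exists>y. (?g has_real_derivative y) (at x) \<and> y \<le> 0" if "q < x" "x < P" for x
    proof (intro exI conjI)
      have x0: "0 < x" "x < 1" using that assms by auto
      show "(?g has_real_derivative (- P / x + (1 - P) / (1 - x) + 4 * (P - x))) (at x)"
        by (rule der[OF x0])
      have "x * (1 - x) \<le> 1/4" using sum_squares_ge_zero[of "x - 1/2" 0]
        by (simp add: power2_eq_square algebra_simps)
      then have "4 * (x * (1 - x)) \<le> 1" by simp
      then have "(P - x) * (4 * (x * (1 - x))) \<le> (P - x) * 1"
        using that by (intro mult_left_mono) auto
      moreover have "- P / x + (1 - P) / (1 - x) + 4 * (P - x)
          = ((P - x) * (4 * (x * (1 - x))) - (P - x)) / (x * (1 - x))"
        using x0 by (simp add: field_simps)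
      moreover have "x * (1 - x) > 0" using x0 by simp
      ultimately show "- P / x + (1 - P) / (1 - x) + 4 * (P - x) \<le> 0"
      proof -
        assume a1: "(P - x) * (4 * (x * (1 - x))) \<le> (P - x) * 1"
          and a2: "- P / x + (1 - P) / (1 - x) + 4 * (P - x) =
             ((P - x) * (4 * (x * (1 - x))) - (P - x)) / (x * (1 - x))"
          and a3: "x * (1 - x) > 0"
        have "(P - x) * (4 * (x * (1 - x))) - (P - x) \<le> 0" using a1 by simp
        from divide_nonpos_pos[OF this a3] show ?thesis using a2 by simp
      qed
    qed
    show "continuous_on {q..P} ?g"
    proof (rule continuous_at_imp_continuous_on, rule ballI)
      fix x assume "x \<in> {q..P}"
      then have "0 < x" "x < 1" using assms by auto
      from DERIV_isCont[OF der[OF this]] show "isCont ?g x" .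
    qed
  qed
  moreover have "?g P = 0" by simp
  moreover have "ln (P / q) = ln P - ln q" using assms by (simp add: ln_div)
  moreover have "ln ((1 - P) / (1 - q)) = ln (1 - P) - ln (1 - q)" using assms by (simp add: ln_div)
  ultimately show ?thesis by simp
qed

definition Pd :: "nat \<Rightarrow> real \<Rightarrow> real" where
  "Pd K \<alpha> = 1 - \<alpha> + \<alpha> / real K"

primrec Dseq :: "nat \<Rightarrow> real \<Rightarrow> real \<Rightarrow> nat \<Rightarrow> real" where
  "Dseq K \<alpha> h 0 = 0"
| "Dseq K \<alpha> h (Suc t) = Dseq K \<alpha> h t + h * real K / (real K - 1) * (Pd K \<alpha> - qf K (Dseq K \<alpha> h t))"

lemma aux_lin:
  fixes qn qo x P :: real
  assumes "qn \<le> qo + x * (P - qo) / 4"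
  shows "P - qn \<ge> (P - qo) * (1 - x / 4)"
  using assms by (simp add: algebra_simps)

lemma w_bound:
  assumes K: "K \<ge> 4" and h: "0 < h" "h \<le> 1/2" and a: "0 < \<alpha>" "\<alpha> < 1"
  shows "Pd K \<alpha> - qf K (Dseq K \<alpha> h t) \<ge> (Pd K \<alpha> - 1 / real K) * (1 - h/3)^t"
proof (induction t)
  case 0
  then show ?case by (simp add: qf_def)
next
  case (Suc t)
  let ?D = "Dseq K \<alpha> h t" and ?P = "Pd K \<alpha>"
  let ?x = "h * real K / (real K - 1)"
  have Kr: "real K \<ge> 4" using K by simp
  have w0: "?P - 1 / real K \<ge> 0"
  proof -
    have "?P - 1 / real K = (1 - \<alpha>) * (1 - 1 / real K)" using Kr by (simp add: Pd_def field_simps)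
    moreover have "1 / real K \<le> 1" using Kr by simp
    ultimately show ?thesis using a by simp
  qed
  have wt: "?P - qf K ?D \<ge> 0"
  proof -
    have "(1 - h/3)^t \<ge> 0" using h by simp
    then have "(Pd K \<alpha> - 1 / real K) * (1 - h/3)^t \<ge> 0" using w0 by simp
    then show ?thesis using Suc.IH by linarith
  qed
  have x0: "?x \<ge> 0" using h Kr by simp
  have x43: "?x / 4 \<le> h / 3"
  proof -
    have "real K / (real K - 1) \<le> 4 / 3" using Kr by (simp add: field_simps)
    then have "h * (real K / (real K - 1)) \<le> h * (4/3)" using h by (intro mult_left_mono) auto
    then have "?x \<le> h * (4/3)" by simp
    from divide_right_mono[OF this, of 4] show ?thesis by simp
  qed
  have "qf K (Dseq K \<alpha> h (Suc t)) \<le> qf K ?D + ?x * (?P - qf K ?D) / 4"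
  proof -
    have nn: "?x * (?P - qf K ?D) \<ge> 0" using x0 wt by (rule mult_nonneg_nonneg)
    have "qf K (?D + ?x * (?P - qf K ?D)) \<le> qf K ?D + ?x * (?P - qf K ?D) / 4"
      by (rule qf_lip) (use K nn in auto)
    moreover have "Dseq K \<alpha> h (Suc t) = ?D + ?x * (?P - qf K ?D)" by simp
    ultimately show ?thesis by (simp only:)
  qed
  then have "?P - qf K (Dseq K \<alpha> h (Suc t)) \<ge> (?P - qf K ?D) * (1 - ?x / 4)"
    by (rule aux_lin)
  moreover have "(?P - qf K ?D) * (1 - ?x / 4) \<ge> (?P - qf K ?D) * (1 - h / 3)"
    using wt x43 by (intro mult_left_mono) auto
  moreover have "(?P - qf K ?D) * (1 - h / 3) \<ge> (?P - 1 / real K) * (1 - h/3)^t * (1 - h / 3)"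
    using Suc.IH h by (intro mult_right_mono) auto
  ultimately have "?P - qf K (Dseq K \<alpha> h (Suc t)) \<ge> (?P - 1 / real K) * (1 - h/3)^t * (1 - h / 3)"
    by linarith
  then show ?case by (simp add: ac_simps)
qed

lemma step_exp:
  fixes h :: real
  assumes "0 \<le> h" "h \<le> 1/2"
  shows "exp (- (2/5) * h) \<le> 1 - h / 3"
proof -
  have "1 + 2/5 * h \<le> exp (2/5 * h)" using exp_ge_add_one_self[of "2/5*h"] by simp
  moreover have "(1 - h/3) * (1 + 2/5 * h) \<ge> 1"
  proof -
    have "(1 - h/3) * (1 + 2/5 * h) = 1 + h * (1/15 - 2/15 * h)" by (simp add: field_simps)
    moreover have "h * (1/15 - 2/15 * h) \<ge> 0" using assms by simp
    ultimately show ?thesis by simp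
  qed
  moreover have "(1 - h/3) * (1 + 2/5 * h) \<le> (1 - h/3) * exp (2/5 * h)"
    using assms calculation(1) by (intro mult_left_mono) auto
  ultimately have "(1 - h/3) * exp (2/5 * h) \<ge> 1" by linarith
  then show ?thesis by (simp add: exp_minus field_simps)
qed

lemma kl_identity:
  assumes K: "K \<ge> 2" and a: "0 < \<alpha>" "\<alpha> < 1"
  shows "ln (exp D + real K - 1) - Pd K \<alpha> * D - loss_star K \<alpha>
       = Pd K \<alpha> * ln (Pd K \<alpha> / qf K D) + (1 - Pd K \<alpha>) * ln ((1 - Pd K \<alpha>) / (1 - qf K D))"
proof -
  let ?P = "Pd K \<alpha>" and ?S = "exp D + real K - 1"
  have Kr: "real K \<ge> 2" using K by simp
  have S0: "?S > 0" using Kr by (smt (verit) exp_gt_zero)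
  have P1: "1 - ?P = \<alpha> * (real K - 1) / real K" using Kr by (simp add: Pd_def field_simps)
  have P0: "?P > 0"
  proof -
    have "?P = (1 - \<alpha>) + \<alpha> / real K" by (simp add: Pd_def)
    moreover have "\<alpha> / real K > 0" using a Kr by simp
    ultimately show ?thesis using a by simp
  qed
  have P1p: "1 - ?P > 0" using P1 a Kr by simp
  have q: "qf K D = exp D / ?S" by (simp add: qf_def)
  have q1: "1 - qf K D = (real K - 1) / ?S" using S0 by (simp add: qf_def field_simps)
  have l1: "ln (?P / qf K D) = ln ?P - D + ln ?S"
  proof -
    have "?P / qf K D = (?P * ?S) / exp D" using S0 by (simp add: q field_simps)
    moreover have "ln ((?P * ?S) / exp D) = ln (?P * ?S) - D"
      using P0 S0 by (subst ln_div) auto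
    moreover have "ln (?P * ?S) = ln ?P + ln ?S" using P0 S0 by (rule ln_mult_pos)
    ultimately show ?thesis by simp
  qed
  have l2: "ln ((1 - ?P) / (1 - qf K D)) = ln (1 - ?P) - ln (real K - 1) + ln ?S"
  proof -
    have "(1 - ?P) / (1 - qf K D) = ((1 - ?P) * ?S) / (real K - 1)" using S0 Kr by (simp add: q1 field_simps)
    moreover have "ln (((1 - ?P) * ?S) / (real K - 1)) = ln ((1 - ?P) * ?S) - ln (real K - 1)"
      using P1p S0 Kr by (subst ln_div) auto
    moreover have "ln ((1 - ?P) * ?S) = ln (1 - ?P) + ln ?S" using P1p S0 by (rule ln_mult_pos)
    ultimately show ?thesis by simp
  qed
  have l3: "ln (\<alpha> / real K) = ln (1 - ?P) - ln (real K - 1)"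
  proof -
    have "\<alpha> / real K = (1 - ?P) / (real K - 1)" using P1 Kr by (simp add: field_simps)
    then have "ln (\<alpha> / real K) = ln ((1 - ?P) / (real K - 1))" by (simp only:)
    also have "... = ln (1 - ?P) - ln (real K - 1)" using P1p Kr by (subst ln_div) auto
    finally show ?thesis .
  qed
  have ls: "loss_star K \<alpha> = - ?P * ln ?P - (1 - ?P) * (ln (1 - ?P) - ln (real K - 1))"
  proof -
    have e: "\<alpha> * (real K - 1) / real K = 1 - ?P" using P1 by simp
    show ?thesis unfolding loss_star_def Pd_def[symmetric] e l3 by simp
  qed
  show ?thesis unfolding l1 l2 ls by (simp add: algebra_simps)
qed

lemma scalar_final:
  assumes K: "K \<ge> 4" and h: "0 < h" "h \<le> 1/2" and a: "0 < \<alpha>" "\<alpha> < 1"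
    and ht: "h * real t \<ge> 10 * ln (ln (real K))"
  shows "ln (exp (Dseq K \<alpha> h t) + real K - 1) - Pd K \<alpha> * Dseq K \<alpha> h t - loss_star K \<alpha>
         \<ge> (1 - \<alpha>)^2 / 2 * exp (- h * real t) * (ln (real K))^2"
proof -
  let ?D = "Dseq K \<alpha> h t" and ?P = "Pd K \<alpha>"
  let ?q = "qf K ?D"
  have Kr: "real K \<ge> 4" using K by simp
  have w0: "?P - 1 / real K = (1 - \<alpha>) * (1 - 1 / real K)" using Kr by (simp add: Pd_def field_simps)
  have w0b: "?P - 1 / real K \<ge> (1 - \<alpha>) / 2"
  proof -
    have "1 - 1 / real K \<ge> 1/2" using Kr by (simp add: field_simps)
    then have "(1 - \<alpha>) * (1 - 1 / real K) \<ge> (1 - \<alpha>) * (1/2)" using a by (intro mult_left_mono) auto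
    then show ?thesis using w0 by simp
  qed
  have pw: "(1 - h/3)^t \<ge> exp (- (2/5) * h) ^ t"
    using step_exp[of h] h by (intro power_mono) auto
  have ew: "exp (- (2/5) * h) ^ t = exp (- (2/5) * (h * real t))"
    by (simp add: exp_of_nat_mult[symmetric] algebra_simps)
  have wb: "?P - ?q \<ge> (1 - \<alpha>) / 2 * exp (- (2/5) * (h * real t))"
  proof -
    have "?P - ?q \<ge> (?P - 1 / real K) * (1 - h/3)^t" using w_bound[OF K h a] .
    moreover have "(?P - 1 / real K) * (1 - h/3)^t \<ge> (1 - \<alpha>) / 2 * exp (- (2/5) * (h * real t))"
      using w0b pw ew a by (intro mult_mono) auto
    ultimately show ?thesis by linarith
  qed
  have wnn: "(1 - \<alpha>) / 2 * exp (- (2/5) * (h * real t)) \<ge> 0" using a by simp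
  have S0: "exp ?D + real K - 1 > 0" using Kr by (smt (verit) exp_gt_zero)
  have q0: "?q > 0" using S0 by (simp add: qf_def)
  have qP: "?q \<le> ?P" using wb wnn by linarith
  have P1: "?P < 1"
  proof -
    have "\<alpha> / real K < \<alpha>" using a Kr by (simp add: field_simps)
    then show ?thesis by (simp add: Pd_def)
  qed
  have "ln (exp ?D + real K - 1) - ?P * ?D - loss_star K \<alpha> \<ge> 2 * (?P - ?q)^2"
    using kl_identity[of K \<alpha> ?D] pinsker[OF q0 qP P1] K a by simp
  moreover have "(?P - ?q)^2 \<ge> ((1 - \<alpha>) / 2 * exp (- (2/5) * (h * real t)))^2"
    using wb wnn by (intro power_mono) auto
  moreover have "((1 - \<alpha>) / 2 * exp (- (2/5) * (h * real t)))^2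
      = (1 - \<alpha>)^2 / 4 * exp (- (4/5) * (h * real t))"
    by (simp add: power_mult_distrib power2_eq_square exp_add[symmetric])
  moreover have "exp (- (4/5) * (h * real t)) \<ge> exp (- h * real t) * (ln (real K))^2"
  proof -
    have lK: "ln (real K) > 0" using Kr by simp
    have "(ln (real K))^2 = exp (2 * ln (ln (real K)))"
    proof -
      have "exp (2 * ln (ln (real K))) = exp (ln (ln (real K))) ^ 2"
        using exp_of_nat_mult[of 2 "ln (ln (real K))"] by simp
      also have "... = (ln (real K))^2" using lK by simp
      finally show ?thesis by simp
    qed
    also have "... \<le> exp ((1/5) * (h * real t))" using ht by simp
    finally have "exp (- h * real t) * (ln (real K))^2 \<le> exp (- h * real t) * exp ((1/5) * (h * real t))"
      by simp
    also have "... = exp (- (4/5) * (h * real t))" by (simp add: exp_add[symmetric])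
    finally show ?thesis .
  qed
  ultimately have f1: "ln (exp ?D + real K - 1) - ?P * ?D - loss_star K \<alpha>
      \<ge> (1 - \<alpha>)^2 / 2 * exp (- (4/5) * (h * real t))"
    and f4: "exp (- (4/5) * (h * real t)) \<ge> exp (- h * real t) * (ln (real K))^2" by auto
  have "(1 - \<alpha>)^2 / 2 * exp (- (4/5) * (h * real t)) \<ge> (1 - \<alpha>)^2 / 2 * (exp (- h * real t) * (ln (real K))^2)"
    using f4 by (rule mult_left_mono) simp
  with f1 show ?thesis by (simp add: mult.assoc)
qed




lemma sum_if_eq:
  fixes a b :: real
  assumes "j < K"
  shows "(\<Sum>k<K. if k = j then a else b) = a + (real K - 1) * b"
proof -
  have "(\<Sum>k<K. if k = j then a else b) = (\<Sum>k<K. b + (if k = j then a - b else 0))"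
    by (rule sum.cong) auto
  also have "... = real K * b + (a - b)" using assms by (simp add: sum.distrib)
  finally show ?thesis by (simp add: algebra_simps)
qed

lemma noise_sum:
  assumes "j < K"
  shows "(\<Sum>i<K. noise_prob K \<alpha> i j) = 1"
proof -
  have "(\<Sum>i<K. noise_prob K \<alpha> i j) = (\<Sum>i<K. \<alpha> / real K + (if i = j then 1 - \<alpha> else 0))"
    by (rule sum.cong) (auto simp: noise_prob_def)
  also have "... = 1" using assms by (simp add: sum.distrib)
  finally show ?thesis .
qed

lemma sumexp_pos: "(K::nat) > 0 \<Longrightarrow> (\<Sum>k<K. exp (f k :: real)) > 0"
  by (rule sum_pos) auto

lemma loss_j_closed:
  assumes "j < K"
  shows "loss_j K \<alpha> E Et W j = ln (\<Sum>k<K. exp (logit K E Et W k j))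
           - (\<Sum>i<K. noise_prob K \<alpha> i j * logit K E Et W i j)"
proof -
  let ?S = "\<Sum>k<K. exp (logit K E Et W k j)"
  have S0: "?S > 0" using assms by (intro sumexp_pos) simp
  have "ln (pred_prob K E Et W i j) = logit K E Et W i j - ln ?S" for i
    unfolding pred_prob_def using S0 by (simp add: ln_div)
  then have "loss_j K \<alpha> E Et W j = - (\<Sum>i<K. noise_prob K \<alpha> i j * (logit K E Et W i j - ln ?S))"
    by (simp add: loss_j_def)
  also have "... = ln ?S * (\<Sum>i<K. noise_prob K \<alpha> i j) - (\<Sum>i<K. noise_prob K \<alpha> i j * logit K E Et W i j)"
    by (simp add: algebra_simps sum_subtractf sum_distrib_left sum_distrib_right)
  finally show ?thesis using noise_sum[OF assms] by simp
qed

lemma logit_pert: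
  assumes "a < K" "b < K"
  shows "logit K E Et (\<lambda>r c. W r c + (if r = a \<and> c = b then s else 0)) i j
       = logit K E Et W i j + s * (Et a i * E b j)"
proof -
  have "logit K E Et (\<lambda>r c. W r c + (if r = a \<and> c = b then s else 0)) i j
      = logit K E Et W i j + (\<Sum>r<K. \<Sum>c<K. Et r i * (if r = a \<and> c = b then s else 0) * E c j)"
    unfolding logit_def by (simp add: algebra_simps sum.distrib)
  also have "(\<Sum>r<K. \<Sum>c<K. Et r i * (if r = a \<and> c = b then s else 0) * E c j)
      = (\<Sum>r<K. \<Sum>c<K. if r = a then (if c = b then Et a i * s * E b j else 0) else 0)"
    by (intro sum.cong) auto
  also have "... = (\<Sum>r<K. if r = a then Et a i * s * E b j else 0)"
    by (rule sum.cong) (use assms in auto)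
  also have "... = s * (Et a i * E b j)" using assms by simp
  finally show ?thesis .
qed

lemma grad_formula:
  assumes ab: "a < K" "b < K"
  shows "mat_grad (loss K C pt \<alpha> E Et) W a b
       = (\<Sum>j<K. item_prob C pt j *
            (\<Sum>i<K. (pred_prob K E Et W i j - noise_prob K \<alpha> i j) * (Et a i * E b j)))"
proof -
  define z where "z = logit K E Et W"
  define cc where "cc = (\<lambda>k j. Et a k * E b j)"
  define p where "p = item_prob C pt"
  define \<pi> where "\<pi> = noise_prob K \<alpha>"
  define F where "F = (\<lambda>s. \<Sum>j<K. p j * (ln (\<Sum>k<K. exp (z k j + s * cc k j))
                        - (\<Sum>i<K. \<pi> i j * (z i j + s * cc i j))))"
  have eq: "(\<lambda>s. loss K C pt \<alpha> E Et (\<lambda>r c. W r c + (if r = a \<and> c = b then s else 0))) = F"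
  proof
    fix s
    show "loss K C pt \<alpha> E Et (\<lambda>r c. W r c + (if r = a \<and> c = b then s else 0)) = F s"
      unfolding loss_def F_def
      by (rule sum.cong) (simp_all add: loss_j_closed logit_pert[OF ab] z_def cc_def p_def \<pi>_def)
  qed
  define D where "D = (\<Sum>j<K. p j * ((\<Sum>k<K. exp (z k j) * cc k j) / (\<Sum>k<K. exp (z k j))
                        - (\<Sum>i<K. \<pi> i j * cc i j)))"
  have Kp: "K > 0" using ab by simp
  have der: "(F has_real_derivative D) (at 0)"
    unfolding F_def D_def
    apply (rule DERIV_cong)
     apply (intro derivative_eq_intros refl)
    using sumexp_pos[OF Kp] apply simp_all
    apply (simp only: mult_zero_left mult_1 add_0 add_0_right)
    apply (simp add: mult.commute)
    done
  have "mat_grad (loss K C pt \<alpha> E Et) W a b = D"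
    unfolding mat_grad_def eq using der by (rule DERIV_imp_deriv)
  also have "D = (\<Sum>j<K. p j * (\<Sum>i<K. (pred_prob K E Et W i j - \<pi> i j) * cc i j))"
    unfolding D_def
  proof (rule sum.cong[OF refl])
    fix j
    let ?S = "\<Sum>k<K. exp (z k j)"
    have "(\<Sum>i<K. (pred_prob K E Et W i j - \<pi> i j) * cc i j)
        = (\<Sum>i<K. exp (z i j) * cc i j / ?S - \<pi> i j * cc i j)"
      by (rule sum.cong[OF refl]) (simp add: pred_prob_def z_def left_diff_distrib)
    also have "... = (\<Sum>k<K. exp (z k j) * cc k j) / ?S - (\<Sum>i<K. \<pi> i j * cc i j)"
      by (simp only: sum_subtractf sum_divide_distrib)
    finally show "p j * ((\<Sum>k<K. exp (z k j) * cc k j) / ?S - (\<Sum>i<K. \<pi> i j * cc i j))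
        = p j * (\<Sum>i<K. (pred_prob K E Et W i j - \<pi> i j) * cc i j)" by simp
  qed
  finally show ?thesis by (simp add: p_def \<pi>_def cc_def)
qed

lemma ortho_contract:
  assumes oE: "orthonormal_cols K E" and oEt: "orthonormal_cols K Et" and ij: "i < K" "j < K"
  shows "(\<Sum>r<K. \<Sum>s<K. Et r i * (\<Sum>j'<K. \<Sum>i'<K. F i' j' * (Et r i' * E s j')) * E s j) = F i j"
proof -
  have step1: "(\<Sum>s<K. Et r i * (\<Sum>j'<K. \<Sum>i'<K. F i' j' * (Et r i' * E s j')) * E s j)
      = (\<Sum>i'<K. F i' j * (Et r i * Et r i'))" for r
  proof -
    have "(\<Sum>s<K. Et r i * (\<Sum>j'<K. \<Sum>i'<K. F i' j' * (Et r i' * E s j')) * E s j)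
        = (\<Sum>s<K. \<Sum>j'<K. \<Sum>i'<K. (F i' j' * (Et r i * Et r i')) * (E s j' * E s j))"
      by (simp add: sum_distrib_left sum_distrib_right ac_simps)
    also have "... = (\<Sum>j'<K. \<Sum>s<K. \<Sum>i'<K. (F i' j' * (Et r i * Et r i')) * (E s j' * E s j))"
      by (rule sum.swap)
    also have "... = (\<Sum>j'<K. \<Sum>i'<K. \<Sum>s<K. (F i' j' * (Et r i * Et r i')) * (E s j' * E s j))"
      by (rule sum.cong[OF refl], rule sum.swap)
    also have "... = (\<Sum>j'<K. \<Sum>i'<K. (F i' j' * (Et r i * Et r i')) * (if j' = j then 1 else 0))"
      using oE ij by (simp add: sum_distrib_left[symmetric] orthonormal_cols_def)
    also have "... = (\<Sum>j'<K. if j' = j then (\<Sum>i'<K. F i' j * (Et r i * Et r i')) else 0)"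
      by (rule sum.cong[OF refl]) auto
    also have "... = (\<Sum>i'<K. F i' j * (Et r i * Et r i'))" using ij by simp
    finally show ?thesis .
  qed
  have "(\<Sum>r<K. \<Sum>s<K. Et r i * (\<Sum>j'<K. \<Sum>i'<K. F i' j' * (Et r i' * E s j')) * E s j)
      = (\<Sum>r<K. \<Sum>i'<K. F i' j * (Et r i * Et r i'))" by (simp only: step1)
  also have "... = (\<Sum>i'<K. \<Sum>r<K. F i' j * (Et r i * Et r i'))" by (rule sum.swap)
  also have "... = (\<Sum>i'<K. F i' j * (if i = i' then 1 else 0))"
    using oEt ij by (simp add: sum_distrib_left[symmetric] orthonormal_cols_def)
  also have "... = F i j" using ij by (simp add: if_distrib cong: if_cong)
  finally show ?thesis .
qed

lemma gd_step:
  assumes oE: "orthonormal_cols K E" and oEt: "orthonormal_cols K Et" and ij: "i < K" "j < K"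
  shows "logit K E Et (gd K C pt \<alpha> E Et \<eta> (Suc t)) i j
       = logit K E Et (gd K C pt \<alpha> E Et \<eta> t) i j
         - \<eta> * (item_prob C pt j * (pred_prob K E Et (gd K C pt \<alpha> E Et \<eta> t) i j - noise_prob K \<alpha> i j))"
proof -
  define W where "W = gd K C pt \<alpha> E Et \<eta> t"
  define F where "F = (\<lambda>i' j'. item_prob C pt j' * (pred_prob K E Et W i' j' - noise_prob K \<alpha> i' j'))"
  have G: "mat_grad (loss K C pt \<alpha> E Et) W r s = (\<Sum>j'<K. \<Sum>i'<K. F i' j' * (Et r i' * E s j'))"
    if "r < K" "s < K" for r s
    unfolding grad_formula[OF that] F_def by (simp add: sum_distrib_left mult.assoc)
  have "logit K E Et (gd K C pt \<alpha> E Et \<eta> (Suc t)) i j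
      = (\<Sum>r<K. \<Sum>s<K. Et r i * (W r s - \<eta> * (\<Sum>j'<K. \<Sum>i'<K. F i' j' * (Et r i' * E s j'))) * E s j)"
    unfolding logit_def by (intro sum.cong refl) (simp add: W_def[symmetric] Let_def G)
  also have "... = logit K E Et W i j
      - \<eta> * (\<Sum>r<K. \<Sum>s<K. Et r i * (\<Sum>j'<K. \<Sum>i'<K. F i' j' * (Et r i' * E s j')) * E s j)"
    unfolding logit_def by (simp add: algebra_simps sum_subtractf sum_distrib_left)
  also have "... = logit K E Et W i j - \<eta> * F i j"
    using ortho_contract[OF oE oEt ij] by simp
  finally show ?thesis by (simp add: W_def F_def)
qed

primrec Bseq :: "nat \<Rightarrow> real \<Rightarrow> real \<Rightarrow> nat \<Rightarrow> real" where
  "Bseq K \<alpha> h 0 = 0"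
| "Bseq K \<alpha> h (Suc t) = Bseq K \<alpha> h t - h * (1 / (exp (Dseq K \<alpha> h t) + real K - 1) - \<alpha> / real K)"

lemma sum_struct:
  assumes j: "j < K" and st: "\<forall>k<K. logit K E Et W k j = B + (if k = j then D else 0)"
  shows "(\<Sum>k<K. exp (logit K E Et W k j)) = exp B * (exp D + real K - 1)"
proof -
  have "(\<Sum>k<K. exp (logit K E Et W k j)) = (\<Sum>k<K. if k = j then exp B * exp D else exp B)"
    by (rule sum.cong[OF refl]) (simp add: st exp_add)
  also have "... = exp B * exp D + (real K - 1) * exp B" by (rule sum_if_eq[OF j])
  finally show ?thesis by (simp add: algebra_simps)
qed

lemma pred_struct:
  assumes K: "K \<ge> 2" and ij: "i < K" "j < K"
    and st: "\<forall>k<K. logit K E Et W k j = B + (if k = j then D else 0)"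
  shows "pred_prob K E Et W i j = (if i = j then exp D else 1) / (exp D + real K - 1)"
proof -
  have "real K \<ge> 2" using K by simp
  then have S0: "exp D + real K - 1 > 0" by (smt (verit) exp_gt_zero)
  show ?thesis
    unfolding pred_prob_def sum_struct[OF ij(2) st] using ij st S0
    by (simp add: exp_add)
qed

lemma alg_step:
  fixes e k h a B D :: real
  assumes k: "k \<ge> 2" and e: "e > 0"
  shows "B + D - h * (e / (e + k - 1) - (1 - a + a / k))
       = B - h * (1 / (e + k - 1) - a / k) + (D + h * k / (k - 1) * ((1 - a + a / k) - e / (e + k - 1)))"
proof -
  have n1: "e + k - 1 \<noteq> 0" and n2: "k - 1 \<noteq> 0" and n3: "k \<noteq> 0" using k e by auto
  define u where "u = 1 / (e + k - 1)"
  have e1: "e / (e + k - 1) = 1 - (k - 1) * u" unfolding u_def using n1 by (simp add: field_simps)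
  have e2: "h * k / (k - 1) * ((1 - a + a / k) - (1 - (k - 1) * u)) = - h * a + h * k * u"
    using n2 n3 by (simp add: field_simps)
  show ?thesis unfolding e1 e2 u_def[symmetric] by (simp add: algebra_simps)
qed

lemma gd_struct:
  assumes oE: "orthonormal_cols K E" and oEt: "orthonormal_cols K Et" and K: "K \<ge> 2" and j: "j < K"
    and h: "h = \<eta> * item_prob C pt j"
  shows "\<forall>i<K. logit K E Et (gd K C pt \<alpha> E Et \<eta> t) i j = Bseq K \<alpha> h t + (if i = j then Dseq K \<alpha> h t else 0)"
proof (induction t)
  case 0
  then show ?case by (simp add: logit_def)
next
  case (Suc t)
  let ?D = "Dseq K \<alpha> h t" and ?B = "Bseq K \<alpha> h t"
  have Kr: "real K \<ge> 2" using K by simp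
  have S0: "exp ?D + real K - 1 > 0" using Kr by (smt (verit) exp_gt_zero)
  show ?case
  proof (intro allI impI)
    fix i assume i: "i < K"
    have e: "logit K E Et (gd K C pt \<alpha> E Et \<eta> (Suc t)) i j
        = ?B + (if i = j then ?D else 0) - h * ((if i = j then exp ?D else 1) / (exp ?D + real K - 1) - noise_prob K \<alpha> i j)"
      unfolding gd_step[OF oE oEt i j] pred_struct[OF K i j Suc.IH] using Suc.IH i h by simp
    show "logit K E Et (gd K C pt \<alpha> E Et \<eta> (Suc t)) i j = Bseq K \<alpha> h (Suc t) + (if i = j then Dseq K \<alpha> h (Suc t) else 0)"
    proof (cases "i = j")
      case True
      have "Bseq K \<alpha> h (Suc t) + Dseq K \<alpha> h (Suc t)
          = ?B - h * (1 / (exp ?D + real K - 1) - \<alpha> / real K)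
            + (?D + h * real K / (real K - 1) * ((1 - \<alpha> + \<alpha> / real K) - exp ?D / (exp ?D + real K - 1)))"
        by (simp add: Pd_def qf_def)
      also have "... = ?B + ?D - h * (exp ?D / (exp ?D + real K - 1) - (1 - \<alpha> + \<alpha> / real K))"
        by (rule alg_step[symmetric]) (use Kr in auto)
      finally show ?thesis unfolding e using True by (simp add: noise_prob_def)
    next
      case False
      show ?thesis unfolding e using False by (simp add: noise_prob_def)
    qed
  qed
qed

lemma loss_struct:
  assumes K: "K \<ge> 2" and j: "j < K"
    and st: "\<forall>k<K. logit K E Et W k j = B + (if k = j then D else 0)"
  shows "loss_j K \<alpha> E Et W j = ln (exp D + real K - 1) - Pd K \<alpha> * D"
proof -
  have "real K \<ge> 2" using K by simp
  then have S0: "exp D + real K - 1 > 0" by (smt (verit) exp_gt_zero)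
  have l: "ln (\<Sum>k<K. exp (logit K E Et W k j)) = B + ln (exp D + real K - 1)"
    unfolding sum_struct[OF j st] using S0 by (simp add: ln_mult_pos)
  have "(\<Sum>i<K. noise_prob K \<alpha> i j * logit K E Et W i j)
      = (\<Sum>i<K. noise_prob K \<alpha> i j * B + (if i = j then noise_prob K \<alpha> j j * D else 0))"
    by (rule sum.cong[OF refl]) (simp add: st algebra_simps)
  also have "... = B + noise_prob K \<alpha> j j * D"
    using j by (simp add: sum.distrib sum_distrib_right[symmetric] noise_sum)
  finally show ?thesis unfolding loss_j_closed[OF j] l by (simp add: noise_prob_def Pd_def)
qed

lemma main_core:
  fixes \<alpha> :: real and M C :: nat and pt :: "nat \<Rightarrow> real" and E Et :: mat and \<eta> :: real and j t :: nat
  assumes a: "0 < \<alpha>" "\<alpha> < 1"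
  assumes H: "M \<ge> 1 \<and> C \<ge> 1 \<and> M * C \<ge> 4 \<and> real M \<le> 1 * real C
       \<and> (\<forall>i<M. pt i > 0) \<and> (\<forall>i j. i < j \<and> j < M \<longrightarrow> pt j < pt i)
       \<and> (\<Sum>i<M. pt i) = 1
       \<and> orthonormal_cols (M * C) E \<and> orthonormal_cols (M * C) Et
       \<and> \<eta> > 0 \<and> \<eta> * item_prob C pt 0 \<le> 1/2
       \<and> j < M * C
       \<and> real t \<ge> 10 * ln (ln (real (M * C))) / (\<eta> * item_prob C pt j)"
  shows "loss_j (M * C) \<alpha> E Et (gd (M * C) C pt \<alpha> E Et \<eta> t) j - loss_star (M * C) \<alpha>
            \<ge> (1 - \<alpha>)^2 / 2 * exp (- \<eta> * item_prob C pt j * real t) * (ln (real (M * C)))^2"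
proof -
    define K where "K = M * C"
    from H have M1: "M \<ge> 1" and C1: "C \<ge> 1" and K4: "K \<ge> 4"
      and ptpos: "\<forall>i<M. pt i > 0" and ptdec: "\<forall>i j. i < j \<and> j < M \<longrightarrow> pt j < pt i"
      and oE: "orthonormal_cols K E" and oEt: "orthonormal_cols K Et"
      and eta: "\<eta> > 0" and eta0: "\<eta> * item_prob C pt 0 \<le> 1/2"
      and j: "j < K" and tt: "real t \<ge> 10 * ln (ln (real K)) / (\<eta> * item_prob C pt j)"
      unfolding K_def by auto
    define h where "h = \<eta> * item_prob C pt j"
    have jM: "j div C < M" using j C1 unfolding K_def
      by (simp add: less_mult_imp_div_less)
    have pj: "item_prob C pt j > 0" using ptpos jM C1 by (simp add: item_prob_def)
    have h0: "h > 0" unfolding h_def using eta pj by simp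
    have ple: "pt (j div C) \<le> pt 0"
    proof (cases "j div C = 0")
      case True then show ?thesis by simp
    next
      case False then show ?thesis using ptdec jM by (meson less_eq_real_def not_gr_zero)
    qed
    have "item_prob C pt j \<le> item_prob C pt 0"
      using ple C1 by (simp add: item_prob_def divide_right_mono)
    then have h2: "h \<le> 1/2" unfolding h_def using eta eta0
      by (smt (verit) mult_left_mono)
    have ht: "h * real t \<ge> 10 * ln (ln (real K))"
      using tt h0 unfolding h_def by (simp add: pos_divide_le_eq mult.commute)
        have K2: "K \<ge> 2" using K4 by simp
    have st: "\<forall>i<K. logit K E Et (gd K C pt \<alpha> E Et \<eta> t) i j = Bseq K \<alpha> h t + (if i = j then Dseq K \<alpha> h t else 0)"
      by (rule gd_struct[OF oE oEt K2 j h_def])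
    have "loss_j K \<alpha> E Et (gd K C pt \<alpha> E Et \<eta> t) j = ln (exp (Dseq K \<alpha> h t) + real K - 1) - Pd K \<alpha> * Dseq K \<alpha> h t"
      by (rule loss_struct[OF K2 j st])
    with scalar_final[OF K4 h0 h2 a ht]
    have "loss_j K \<alpha> E Et (gd K C pt \<alpha> E Et \<eta> t) j - loss_star K \<alpha>
        \<ge> (1 - \<alpha>)^2 / 2 * exp (- h * real t) * (ln (real K))^2" by simp
    then show "loss_j (M * C) \<alpha> E Et (gd (M * C) C pt \<alpha> E Et \<eta> t) j - loss_star (M * C) \<alpha>
            \<ge> (1 - \<alpha>)^2 / 2 * exp (- \<eta> * item_prob C pt j * real t) * (ln (real (M * C)))^2"
      unfolding K_def h_def by simp
qed

theorem theorem5p5: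
  fixes \<alpha> :: real
  assumes "0 < \<alpha>" and "\<alpha> < 1"
  shows "\<exists>c\<^sub>\<eta>>0. \<exists>\<delta>>0. \<exists>A>0. \<exists>c>0. \<exists>K0::nat.
    \<forall>(M::nat) (C::nat) (pt::nat \<Rightarrow> real) (E::mat) (Et::mat) (\<eta>::real) (j::nat) (t::nat).
      let K = M * C in
      (M \<ge> 1 \<and> C \<ge> 1 \<and> K \<ge> K0 \<and> real M \<le> \<delta> * real C
       \<and> (\<forall>i<M. pt i > 0) \<and> (\<forall>i j. i < j \<and> j < M \<longrightarrow> pt j < pt i)
       \<and> (\<Sum>i<M. pt i) = 1
       \<and> orthonormal_cols K E \<and> orthonormal_cols K Et
       \<and> \<eta> > 0 \<and> \<eta> * item_prob C pt 0 \<le> c\<^sub>\<eta>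
       \<and> j < K
       \<and> real t \<ge> A * ln (ln (real K)) / (\<eta> * item_prob C pt j))
      \<longrightarrow> loss_j K \<alpha> E Et (gd K C pt \<alpha> E Et \<eta> t) j - loss_star K \<alpha>
            \<ge> c * exp (- \<eta> * item_prob C pt j * real t) * (ln (real K))^2"
  unfolding Let_def
  apply (rule exI[of _ "1/2"], rule conjI, simp)
  apply (rule exI[of _ 1], rule conjI, simp)
  apply (rule exI[of _ 10], rule conjI, simp)
  apply (rule exI[of _ "(1 - \<alpha>)^2 / 2"], rule conjI)
   apply (use assms in simp)
  apply (rule exI[of _ "4::nat"])
  apply (intro allI impI)
  apply (rule main_core[OF assms])
  apply simp
  done


end
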